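(* Let $\mathcal{S}^1$, $l\in K$, $\sigma\in\{+1,-1\}$ and the polyhedron $\mathcal{C}^l$ be as described in the context. Let $\bar{\pi}^l$ be an extreme point of $\mathcal{C}^l$ whose corresponding inequality is a non-trivial facet-defining inequality of $\mathrm{conv}(\mathcal{S}^1)$. Then $\bar{\pi}^l$ can be scaled in such a way that all of its components are $0$ or $1$.
   Context: Let $N=\{1,\dots,n\}$. Let $\Xi=\{x\in\mathbb{R}^n : Ex\ge f,\ 0\le x\le u\}$ be a network polytope of a directed network $G=(V,A)$ with arc set $A$ identified with $N$ ($x_i$ is the flow on arc $i$): the rows of $Ex\ge f$, indexed by a set $T$, are, for each node $v\in V$, the positive flow-balance inequality $\sum_{a\in\delta^+(v)}x_a-\sum_{a\in\delta^-(v)}x_a\ge f_v$ and the negative flow-balance inequality $-\sum_{a\in\delta^+(v)}x_a+\sum_{a\in\delta^-(v)}x_a\ge -f_v$ (here $\delta^+(v),\delta^-(v)$ are the sets of outgoing and incoming arcs of $v$); $u\in\mathbb{R}^n$ is the capacity vector. Let $\Delta_1=\{y_1\in\mathbb{R}: 0\le y_1\le 1\}$, $K=N$, and $\mathcal{S}^1=\{(x,y_1,z)\in\Xi\times\Delta_1\times\mathbb{R}^n : y_1x_k=z_k\ \forall k\in K\}$; for $k\in K$ let $A^k\in\mathbb{R}^{1\times n}$ be the unit row vector with $A^k_{1k}=1$, so the $k$-th bilinear constraint is $y_1A^kx=z_k$. Let $K_l=K\setminus\{l\}$. The vector $\pi^l=(\beta^+,\beta^-,\gamma^1,\theta,\eta^1,\rho^1,\lambda,\mu)$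 has $\beta^\pm\in\mathbb{R}^{K_l}_+$, $\gamma^1,\theta\in\mathbb{R}^T_+$, $\eta^1,\rho^1,\lambda,\mu\in\mathbb{R}^n_+$, and $\mathcal{C}^l=\{\pi^l\ge 0 : \sum_{k\in K_l}A^k_{1i}(\beta^+_k-\beta^-_k)+\sum_{t\in T}E_{ti}(\gamma^1_t-\theta_t)+\eta^1_i-\rho^1_i-\lambda_i+\mu_i=\sigma A^l_{1i}\ \ \forall i\in N\}$. The inequality corresponding to $\pi^l\in\mathcal{C}^l$ is the linear inequality obtained by summing: $(\beta^+_k-\beta^-_k)(y_1x_k-z_k)=0$ for $k\in K_l$; $\gamma^1_t\,y_1(E_{t\cdot}x-f_t)\ge0$ and $\theta_t(1-y_1)(E_{t\cdot}x-f_t)\ge 0$ for $t\in T$; $\eta^1_i\,y_1x_i\ge0$, $\rho^1_i\,y_1(u_i-x_i)\ge0$, $\lambda_i(1-y_1)x_i\ge0$, $\mu_i(1-y_1)(u_i-x_i)\ge0$ for $i\in N$; and the base equality $y_1x_l-z_l=0$ multiplied by $-\sigma$ (so that, by the defining equations of $\mathcal{C}^l$, all bilinear terms $y_1x_i$ cancel). A facet-defining inequality of $\mathrm{conv}(\mathcal{S}^1)$ is non-trivial if it is not implied by the linear constraints describing $\Xi$ and $\Delta_1$. *)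

theory Defs
  imports "HOL-Analysis.Analysis"
begin

text \<open>Network data: arcs are the elements of the finite type 'n (this is N, with n = CARD('n)),
 nodes are the elements of the finite type 'v (this is V).
 Rows of E x \<ge> f are indexed by T = 'v \<times> bool: (v, True) is the positive and
 (v, False) the negative flow-balance inequality of node v.\<close>

definition Emat :: "('n \<Rightarrow> 'v) \<Rightarrow> ('n \<Rightarrow> 'v) \<Rightarrow> 'v \<times> bool \<Rightarrow> 'n \<Rightarrow> real" where
  "Emat tail head t i =
     (let c = (if tail i = fst t then 1 else 0) - (if head i = fst t then 1 else 0)
      in if snd t then c else - c)"

definition frhs :: "('v \<Rightarrow> real) \<Rightarrow> 'v \<times> bool \<Rightarrow> real" where
  "frhs fv t = (if snd t then fv (fst t) else - fv (fst t))"

definition Erow :: "('n::finite \<Rightarrow> 'v) \<Rightarrow> ('n \<Rightarrow> 'v) \<Rightarrow> 'v \<times> bool \<Rightarrow> real^'n \<Rightarrow> real" where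
  "Erow tail head t x = (\<Sum>i\<in>UNIV. Emat tail head t i * x $ i)"

definition Arow :: "'n \<Rightarrow> 'n \<Rightarrow> real" where
  "Arow k i = (if i = k then 1 else 0)"

definition Xi :: "('n::finite \<Rightarrow> 'v::finite) \<Rightarrow> ('n \<Rightarrow> 'v) \<Rightarrow> ('v \<Rightarrow> real) \<Rightarrow> real^'n \<Rightarrow> (real^'n) set" where
  "Xi tail head fv u = {x. (\<forall>t. Erow tail head t x \<ge> frhs fv t) \<and> (\<forall>i. 0 \<le> x $ i \<and> x $ i \<le> u $ i)}"

definition S1 :: "('n::finite \<Rightarrow> 'v::finite) \<Rightarrow> ('n \<Rightarrow> 'v) \<Rightarrow> ('v \<Rightarrow> real) \<Rightarrow> real^'n
      \<Rightarrow> ((real^'n) \<times> real \<times> (real^'n)) set" where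
  "S1 tail head fv u = {(x, y, z). x \<in> Xi tail head fv u \<and> 0 \<le> y \<and> y \<le> 1 \<and>
      (\<forall>k. y * (\<Sum>i\<in>UNIV. Arow k i * x $ i) = z $ k)}"

text \<open>Multiplier vectors
  \<pi>^l = (\<beta>+, \<beta>-, \<gamma>^1, \<theta>, \<eta>^1, \<rho>^1, \<lambda>, \<mu>).
  \<beta>+ and \<beta>- are indexed by K_l = N - {l}; they are stored as vectors over N whose
  l-th component is required to be 0 (see Cl), so that they carry exactly the K_l coordinates.\<close>
type_synonym ('n, 'v) mult =
  "(real^'n) \<times> (real^'n) \<times> (real^('v \<times> bool)) \<times> (real^('v \<times> bool)) \<times> (real^'n) \<times> (real^'n) \<times> (real^'n) \<times> (real^'n)"

definition Cl :: "('n::finite \<Rightarrow> 'v::finite) \<Rightarrow> ('n \<Rightarrow> 'v) \<Rightarrow> 'n \<Rightarrow> real \<Rightarrow> ('n, 'v) mult set" where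
  "Cl tail head l \<sigma> = {(bp, bm, g, th, et, rh, la, mu).
     bp $ l = 0 \<and> bm $ l = 0 \<and>
     (\<forall>k. bp $ k \<ge> 0 \<and> bm $ k \<ge> 0 \<and> et $ k \<ge> 0 \<and> rh $ k \<ge> 0 \<and> la $ k \<ge> 0 \<and> mu $ k \<ge> 0) \<and>
     (\<forall>t. g $ t \<ge> 0 \<and> th $ t \<ge> 0) \<and>
     (\<forall>i. (\<Sum>k\<in>UNIV - {l}. Arow k i * (bp $ k - bm $ k))
          + (\<Sum>t\<in>UNIV. Emat tail head t i * (g $ t - th $ t))
          + et $ i - rh $ i - la $ i + mu $ i = \<sigma> * Arow l i)}"

text \<open>For \<pi>^l in C^l all bilinear terms y_1 x_i cancel, so this is an
  affine function of (x, y_1, z) and the inequality is ineq_fun ... p \<ge> 0.\<close>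
definition ineq_fun :: "('n::finite \<Rightarrow> 'v::finite) \<Rightarrow> ('n \<Rightarrow> 'v) \<Rightarrow> ('v \<Rightarrow> real) \<Rightarrow> real^'n
      \<Rightarrow> 'n \<Rightarrow> real \<Rightarrow> ('n, 'v) mult \<Rightarrow> (real^'n) \<times> real \<times> (real^'n) \<Rightarrow> real" where
  "ineq_fun tail head fv u l \<sigma> \<pi> p =
     (case \<pi> of (bp, bm, g, th, et, rh, la, mu) \<Rightarrow>
      (case p of (x, y, z) \<Rightarrow>
        (\<Sum>k\<in>UNIV - {l}. (bp $ k - bm $ k) * (y * (\<Sum>i\<in>UNIV. Arow k i * x $ i) - z $ k))
      + (\<Sum>t\<in>UNIV. g $ t * (y * (Erow tail head t x - frhs fv t)))
      + (\<Sum>t\<in>UNIV. th $ t * ((1 - y) * (Erow tail head t x - frhs fv t)))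
      + (\<Sum>i\<in>UNIV. et $ i * (y * x $ i) + rh $ i * (y * (u $ i - x $ i))
                  + la $ i * ((1 - y) * x $ i) + mu $ i * ((1 - y) * (u $ i - x $ i)))
      - \<sigma> * (y * (\<Sum>i\<in>UNIV. Arow l i * x $ i) - z $ l)))"

definition facet_defining :: "(('a::euclidean_space) \<Rightarrow> real) \<Rightarrow> 'a set \<Rightarrow> bool" where
  "facet_defining h S \<longleftrightarrow>
     (\<forall>p\<in>convex hull S. h p \<ge> 0) \<and> {p \<in> convex hull S. h p = 0} facet_of (convex hull S)"

text \<open>Non-trivial: not implied by the linear constraints describing \<Xi> and \<Delta>_1
  (i.e. violated by some (x, y_1, z) with x \<in> \<Xi>, 0 \<le> y_1 \<le> 1, z arbitrary).\<close>
definition nontrivial :: "('n::finite \<Rightarrow> 'v::finite) \<Rightarrow> ('n \<Rightarrow> 'v) \<Rightarrow> ('v \<Rightarrow> real) \<Rightarrow> real^'n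
      \<Rightarrow> ((real^'n) \<times> real \<times> (real^'n) \<Rightarrow> real) \<Rightarrow> bool" where
  "nontrivial tail head fv u h \<longleftrightarrow>
     \<not> (\<forall>x y z. x \<in> Xi tail head fv u \<and> 0 \<le> y \<and> y \<le> 1 \<longrightarrow> h (x, y, z) \<ge> 0)"

definition comps01 :: "('n::finite, 'v::finite) mult \<Rightarrow> bool" where
  "comps01 \<pi> = (case \<pi> of (bp, bm, g, th, et, rh, la, mu) \<Rightarrow>
     (\<forall>k. bp $ k \<in> {0,1} \<and> bm $ k \<in> {0,1} \<and> et $ k \<in> {0,1} \<and> rh $ k \<in> {0,1}
          \<and> la $ k \<in> {0,1} \<and> mu $ k \<in> {0,1}) \<and>
     (\<forall>t. g $ t \<in> {0,1} \<and> th $ t \<in> {0,1}))"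

end

theory Submission
  imports Defs
begin


definition Pagg :: "real^('v::finite \<times> bool) \<Rightarrow> real^('v \<times> bool) \<Rightarrow> 'v \<Rightarrow> real" where
  "Pagg g th v = (g$(v,True) - th$(v,True)) - (g$(v,False) - th$(v,False))"

lemma Esum:
  fixes tail head :: "'n::finite \<Rightarrow> 'v::finite"
  shows "(\<Sum>t\<in>UNIV. Emat tail head t i * (g$t - th$t)) = Pagg g th (tail i) - Pagg g th (head i)"
proof -
  have U: "(UNIV :: ('v \<times> bool) set) = UNIV \<times> UNIV" by simp
  have "(\<Sum>t\<in>UNIV. Emat tail head t i * (g$t - th$t))
     = (\<Sum>v\<in>UNIV. \<Sum>b\<in>UNIV. Emat tail head (v,b) i * (g$(v,b) - th$(v,b)))"
    by (subst U, subst sum.cartesian_product) simp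
  also have "\<dots> = (\<Sum>v\<in>UNIV. ((if tail i = v then 1 else 0) - (if head i = v then 1 else 0)) * Pagg g th v)"
    by (rule sum.cong) (auto simp: UNIV_bool Emat_def Pagg_def Let_def algebra_simps)
  also have "\<dots> = (\<Sum>v\<in>UNIV. (if tail i = v then Pagg g th v else 0)) - (\<Sum>v\<in>UNIV. (if head i = v then Pagg g th v else 0))"
    by (subst sum_subtractf[symmetric], rule sum.cong) auto
  also have "\<dots> = Pagg g th (tail i) - Pagg g th (head i)" by simp
  finally show ?thesis .
qed

lemma Asum: fixes l :: "'n::finite" shows "(\<Sum>k\<in>UNIV-{l}. Arow k i * w k) = (if i = l then 0 else (w i::real))"
proof -
  have "(\<Sum>k\<in>UNIV-{l}. Arow k i * w k) = (\<Sum>k\<in>UNIV-{l}. if k = i then w k else 0)"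
    by (rule sum.cong) (auto simp: Arow_def)
  then show ?thesis by simp
qed

lemma Cl_eq:
  fixes tail head :: "'n::finite \<Rightarrow> 'v::finite"
  assumes "bp $ l = 0" "bm $ l = 0"
  shows "(\<Sum>k\<in>UNIV - {l}. Arow k i * (bp $ k - bm $ k))
          + (\<Sum>t\<in>UNIV. Emat tail head t i * (g $ t - th $ t))
          + et $ i - rh $ i - la $ i + mu $ i
       = (bp$i - bm$i) + Pagg g th (tail i) - Pagg g th (head i) + et $ i - rh $ i - la $ i + mu $ i"
  using assms by (simp add: Esum Asum[where w="\<lambda>k. bp$k - bm$k"])

lemma Cl_iff:
  fixes tail head :: "'n::finite \<Rightarrow> 'v::finite"
  shows "(bp, bm, g, th, et, rh, la, mu) \<in> Cl tail head l \<sigma> \<longleftrightarrow>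
     bp $ l = 0 \<and> bm $ l = 0 \<and>
     (\<forall>k. bp $ k \<ge> 0 \<and> bm $ k \<ge> 0 \<and> et $ k \<ge> 0 \<and> rh $ k \<ge> 0 \<and> la $ k \<ge> 0 \<and> mu $ k \<ge> 0) \<and>
     (\<forall>t. g $ t \<ge> 0 \<and> th $ t \<ge> 0) \<and>
     (\<forall>i. (bp$i - bm$i) + Pagg g th (tail i) - Pagg g th (head i) + et $ i - rh $ i - la $ i + mu $ i = \<sigma> * Arow l i)"
  (is "?L \<longleftrightarrow> ?A \<and> ?B \<and> ?C \<and> ?D \<and> ?E")
proof -
  have L: "?L \<longleftrightarrow> ?A \<and> ?B \<and> ?C \<and> ?D \<and>
     (\<forall>i. (\<Sum>k\<in>UNIV - {l}. Arow k i * (bp $ k - bm $ k))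
          + (\<Sum>t\<in>UNIV. Emat tail head t i * (g $ t - th $ t))
          + et $ i - rh $ i - la $ i + mu $ i = \<sigma> * Arow l i)"
    unfolding Cl_def by (simp only: mem_Collect_eq prod.case)
  have "?A \<and> ?B \<Longrightarrow> (\<forall>i. (\<Sum>k\<in>UNIV - {l}. Arow k i * (bp $ k - bm $ k))
          + (\<Sum>t\<in>UNIV. Emat tail head t i * (g $ t - th $ t))
          + et $ i - rh $ i - la $ i + mu $ i = \<sigma> * Arow l i) \<longleftrightarrow> ?E"
    by (simp only: Cl_eq)
  then show ?thesis using L by blast
qed



lemma eps_vec:
  fixes x d :: "real^'m::finite"
  assumes "\<forall>j. x$j \<ge> 0" "\<forall>j. x$j = 0 \<longrightarrow> d$j = 0"
  shows "\<exists>e>0. \<forall>j. e * \<bar>d$j\<bar> \<le> x$j"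
proof -
  define S where "S = (\<lambda>j. x$j / \<bar>d$j\<bar>) ` {j. d$j \<noteq> 0}"
  define e where "e = Min (insert 1 S)"
  have fin: "finite (insert 1 S)" unfolding S_def by simp
  have pos: "\<forall>s\<in>insert 1 S. s > 0"
    unfolding S_def using assms by (auto intro!: divide_pos_pos simp: order_le_less)
  have "e > 0" unfolding e_def using fin pos by simp
  moreover have "e * \<bar>d$j\<bar> \<le> x$j" for j
  proof (cases "d$j = 0")
    case True then show ?thesis using assms by simp
  next
    case False
    then have "x$j / \<bar>d$j\<bar> \<in> insert 1 S" unfolding S_def by auto
    then have "e \<le> x$j / \<bar>d$j\<bar>" unfolding e_def using fin by simp
    then show ?thesis using False by (simp add: le_divide_eq)
  qed
  ultimately show ?thesis by blast
qed

lemma Pagg_lin: "Pagg (g + s *\<^sub>R dg) (th + s *\<^sub>R dth) v = Pagg g th v + s * Pagg dg dth v"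
  by (simp add: Pagg_def algebra_simps)

lemma not_extreme:
  fixes tail head :: "'n::finite \<Rightarrow> 'v::finite"
  assumes pi: "(bp, bm, g, th, et, rh, la, mu) \<in> Cl tail head l \<sigma>"
    and s1: "\<forall>k. bp$k = 0 \<longrightarrow> dbp$k = 0" and s2: "\<forall>k. bm$k = 0 \<longrightarrow> dbm$k = 0"
    and s3: "\<forall>k. g$k = 0 \<longrightarrow> dg$k = 0" and s4: "\<forall>k. th$k = 0 \<longrightarrow> dth$k = 0"
    and s5: "\<forall>k. et$k = 0 \<longrightarrow> dEt$k = 0" and s6: "\<forall>k. rh$k = 0 \<longrightarrow> drh$k = 0"
    and s7: "\<forall>k. la$k = 0 \<longrightarrow> dla$k = 0" and s8: "\<forall>k. mu$k = 0 \<longrightarrow> dmu$k = 0"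
    and hom: "\<forall>i. (dbp$i - dbm$i) + Pagg dg dth (tail i) - Pagg dg dth (head i) + dEt$i - drh$i - dla$i + dmu$i = 0"
    and nz: "(dbp, dbm, dg, dth, dEt, drh, dla, dmu) \<noteq> 0"
  shows "\<not> (bp, bm, g, th, et, rh, la, mu) extreme_point_of Cl tail head l \<sigma>"
proof
  assume ext: "(bp, bm, g, th, et, rh, la, mu) extreme_point_of Cl tail head l \<sigma>"
  note C = pi[unfolded Cl_iff]
  note C1 = conjunct1[OF C] and C2 = conjunct1[OF conjunct2[OF C]]
    and C3 = conjunct1[OF conjunct2[OF conjunct2[OF C]]]
    and C4 = conjunct1[OF conjunct2[OF conjunct2[OF conjunct2[OF C]]]]
    and C5 = conjunct2[OF conjunct2[OF conjunct2[OF conjunct2[OF C]]]]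
  obtain e1 where e1: "e1 > 0" "\<forall>j. e1 * \<bar>dbp$j\<bar> \<le> bp$j" using eps_vec[of bp dbp] C3 s1 by blast
  obtain e2 where e2: "e2 > 0" "\<forall>j. e2 * \<bar>dbm$j\<bar> \<le> bm$j" using eps_vec[of bm dbm] C3 s2 by blast
  obtain e3 where e3: "e3 > 0" "\<forall>j. e3 * \<bar>dg$j\<bar> \<le> g$j" using eps_vec[of g dg] C4 s3 by blast
  obtain e4 where e4: "e4 > 0" "\<forall>j. e4 * \<bar>dth$j\<bar> \<le> th$j" using eps_vec[of th dth] C4 s4 by blast
  obtain e5 where e5: "e5 > 0" "\<forall>j. e5 * \<bar>dEt$j\<bar> \<le> et$j" using eps_vec[of et dEt] C3 s5 by blast
  obtain e6 where e6: "e6 > 0" "\<forall>j. e6 * \<bar>drh$j\<bar> \<le> rh$j" using eps_vec[of rh drh] C3 s6 by blast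
  obtain e7 where e7: "e7 > 0" "\<forall>j. e7 * \<bar>dla$j\<bar> \<le> la$j" using eps_vec[of la dla] C3 s7 by blast
  obtain e8 where e8: "e8 > 0" "\<forall>j. e8 * \<bar>dmu$j\<bar> \<le> mu$j" using eps_vec[of mu dmu] C3 s8 by blast
  define e where "e = Min {e1, e2, e3, e4, e5, e6, e7, e8}"
  have epos: "e > 0" unfolding e_def using e1(1) e2(1) e3(1) e4(1) e5(1) e6(1) e7(1) e8(1) by simp
  have key: "a + s * b \<ge> 0" if "\<bar>s\<bar> \<le> e" "ee * \<bar>b\<bar> \<le> a" "e \<le> ee" for s a b ee :: real
  proof -
    have "\<bar>s * b\<bar> \<le> e * \<bar>b\<bar>" using that by (simp add: abs_mult mult_right_mono)
    also have "\<dots> \<le> ee * \<bar>b\<bar>" using that by (simp add: mult_right_mono)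
    finally show ?thesis using that by linarith
  qed
  have mem: "(bp + s *\<^sub>R dbp, bm + s *\<^sub>R dbm, g + s *\<^sub>R dg, th + s *\<^sub>R dth,
              et + s *\<^sub>R dEt, rh + s *\<^sub>R drh, la + s *\<^sub>R dla, mu + s *\<^sub>R dmu) \<in> Cl tail head l \<sigma>"
    if s: "\<bar>s\<bar> \<le> e" for s
  proof -
    have le: "e \<le> e1" "e \<le> e2" "e \<le> e3" "e \<le> e4" "e \<le> e5" "e \<le> e6" "e \<le> e7" "e \<le> e8"
      unfolding e_def by (simp_all add: min_le_iff_disj)
    have A: "(bp + s *\<^sub>R dbp) $ l = 0" "(bm + s *\<^sub>R dbm) $ l = 0" using C1 C2 s1 s2 by simp_all
    have B: "\<forall>k. (bp + s *\<^sub>R dbp) $ k \<ge> 0 \<and> (bm + s *\<^sub>R dbm) $ k \<ge> 0 \<and> (et + s *\<^sub>R dEt) $ k \<ge> 0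
       \<and> (rh + s *\<^sub>R drh) $ k \<ge> 0 \<and> (la + s *\<^sub>R dla) $ k \<ge> 0 \<and> (mu + s *\<^sub>R dmu) $ k \<ge> 0"
      using key[OF s e1(2)[rule_format] le(1)] key[OF s e2(2)[rule_format] le(2)] key[OF s e5(2)[rule_format] le(5)]
        key[OF s e6(2)[rule_format] le(6)] key[OF s e7(2)[rule_format] le(7)] key[OF s e8(2)[rule_format] le(8)]
      by simp
    have D: "\<forall>t. (g + s *\<^sub>R dg) $ t \<ge> 0 \<and> (th + s *\<^sub>R dth) $ t \<ge> 0"
      using key[OF s e3(2)[rule_format] le(3)] key[OF s e4(2)[rule_format] le(4)] by simp
    have E: "(bp + s *\<^sub>R dbp) $ i - (bm + s *\<^sub>R dbm) $ i + Pagg (g + s *\<^sub>R dg) (th + s *\<^sub>R dth) (tail i)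
        - Pagg (g + s *\<^sub>R dg) (th + s *\<^sub>R dth) (head i) + (et + s *\<^sub>R dEt) $ i - (rh + s *\<^sub>R drh) $ i
        - (la + s *\<^sub>R dla) $ i + (mu + s *\<^sub>R dmu) $ i = \<sigma> * Arow l i" for i
    proof -
      have "(bp + s *\<^sub>R dbp) $ i - (bm + s *\<^sub>R dbm) $ i + Pagg (g + s *\<^sub>R dg) (th + s *\<^sub>R dth) (tail i)
        - Pagg (g + s *\<^sub>R dg) (th + s *\<^sub>R dth) (head i) + (et + s *\<^sub>R dEt) $ i - (rh + s *\<^sub>R drh) $ i
        - (la + s *\<^sub>R dla) $ i + (mu + s *\<^sub>R dmu) $ i
        = ((bp$i - bm$i) + Pagg g th (tail i) - Pagg g th (head i) + et $ i - rh $ i - la $ i + mu $ i)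
          + s * ((dbp$i - dbm$i) + Pagg dg dth (tail i) - Pagg dg dth (head i) + dEt$i - drh$i - dla$i + dmu$i)"
        by (simp add: Pagg_lin algebra_simps)
      also have "\<dots> = \<sigma> * Arow l i" using C5 hom by simp
      finally show ?thesis .
    qed
    show ?thesis unfolding Cl_iff using A B D E by blast
  qed
  define p1 where "p1 = (bp + e *\<^sub>R dbp, bm + e *\<^sub>R dbm, g + e *\<^sub>R dg, th + e *\<^sub>R dth,
              et + e *\<^sub>R dEt, rh + e *\<^sub>R drh, la + e *\<^sub>R dla, mu + e *\<^sub>R dmu)"
  define p2 where "p2 = (bp + (-e) *\<^sub>R dbp, bm + (-e) *\<^sub>R dbm, g + (-e) *\<^sub>R dg, th + (-e) *\<^sub>R dth,
              et + (-e) *\<^sub>R dEt, rh + (-e) *\<^sub>R drh, la + (-e) *\<^sub>R dla, mu + (-e) *\<^sub>R dmu)"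
  have p1: "p1 \<in> Cl tail head l \<sigma>" unfolding p1_def by (rule mem) (use epos in simp)
  have p2: "p2 \<in> Cl tail head l \<sigma>" unfolding p2_def by (rule mem) (use epos in simp)
  have mid: "midpoint p1 p2 = (bp, bm, g, th, et, rh, la, mu)"
    unfolding p1_def p2_def midpoint_def by (simp add: vec_eq_iff algebra_simps)
  have ne: "p1 \<noteq> p2"
  proof
    assume "p1 = p2"
    then have "dbp = 0 \<and> dbm = 0 \<and> dg = 0 \<and> dth = 0 \<and> dEt = 0 \<and> drh = 0 \<and> dla = 0 \<and> dmu = 0"
      unfolding p1_def p2_def using epos by (simp add: vec_eq_iff)
    then show False using nz by (simp add: zero_prod_def)
  qed
  have "midpoint p1 p2 \<in> open_segment p1 p2" using ne by simp
  then have inseg: "(bp, bm, g, th, et, rh, la, mu) \<in> open_segment p1 p2" by (simp only: mid)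
  have "\<forall>a\<in>Cl tail head l \<sigma>. \<forall>b\<in>Cl tail head l \<sigma>. (bp, bm, g, th, et, rh, la, mu) \<notin> open_segment a b"
    using ext unfolding extreme_point_of_def by (elim conjE)
  then show False using p1 p2 inseg by blast
qed



lemma six_group:
  fixes x1 x2 x3 x4 x5 x6 :: real
  assumes H: "\<And>a1 a2 a3 a4 a5 a6. (x1 = 0 \<longrightarrow> a1 = 0) \<Longrightarrow> (x2 = 0 \<longrightarrow> a2 = 0) \<Longrightarrow> (x3 = 0 \<longrightarrow> a3 = 0) \<Longrightarrow> (x4 = 0 \<longrightarrow> a4 = 0) \<Longrightarrow> (x5 = 0 \<longrightarrow> a5 = 0) \<Longrightarrow> (x6 = 0 \<longrightarrow> a6 = 0) \<Longrightarrow> a1 - a2 + a3 - a4 - a5 + a6 = (0::real) \<Longrightarrow> a1 = 0 \<and> a2 = 0 \<and> a3 = 0 \<and> a4 = 0 \<and> a5 = 0 \<and> a6 = 0"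
  shows "(x1 \<noteq> 0 \<longrightarrow> x1 = (x1 - x2 + x3 - x4 - x5 + x6)) \<and> (x2 \<noteq> 0 \<longrightarrow> x2 = - (x1 - x2 + x3 - x4 - x5 + x6)) \<and> (x3 \<noteq> 0 \<longrightarrow> x3 = (x1 - x2 + x3 - x4 - x5 + x6)) \<and> (x4 \<noteq> 0 \<longrightarrow> x4 = - (x1 - x2 + x3 - x4 - x5 + x6)) \<and> (x5 \<noteq> 0 \<longrightarrow> x5 = - (x1 - x2 + x3 - x4 - x5 + x6)) \<and> (x6 \<noteq> 0 \<longrightarrow> x6 = (x1 - x2 + x3 - x4 - x5 + x6))"
proof -
  have p1_2: "x1 = 0 \<or> x2 = 0" using H[of "1" "(1)" "0" "0" "0" "0"] by fastforce
  have p1_3: "x1 = 0 \<or> x3 = 0" using H[of "1" "0" "(-1)" "0" "0" "0"] by fastforce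
  have p1_4: "x1 = 0 \<or> x4 = 0" using H[of "1" "0" "0" "(1)" "0" "0"] by fastforce
  have p1_5: "x1 = 0 \<or> x5 = 0" using H[of "1" "0" "0" "0" "(1)" "0"] by fastforce
  have p1_6: "x1 = 0 \<or> x6 = 0" using H[of "1" "0" "0" "0" "0" "(-1)"] by fastforce
  have p2_3: "x2 = 0 \<or> x3 = 0" using H[of "0" "1" "(1)" "0" "0" "0"] by fastforce
  have p2_4: "x2 = 0 \<or> x4 = 0" using H[of "0" "1" "0" "(-1)" "0" "0"] by fastforce
  have p2_5: "x2 = 0 \<or> x5 = 0" using H[of "0" "1" "0" "0" "(-1)" "0"] by fastforce
  have p2_6: "x2 = 0 \<or> x6 = 0" using H[of "0" "1" "0" "0" "0" "(1)"] by fastforce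
  have p3_4: "x3 = 0 \<or> x4 = 0" using H[of "0" "0" "1" "(1)" "0" "0"] by fastforce
  have p3_5: "x3 = 0 \<or> x5 = 0" using H[of "0" "0" "1" "0" "(1)" "0"] by fastforce
  have p3_6: "x3 = 0 \<or> x6 = 0" using H[of "0" "0" "1" "0" "0" "(-1)"] by fastforce
  have p4_5: "x4 = 0 \<or> x5 = 0" using H[of "0" "0" "0" "1" "(-1)" "0"] by fastforce
  have p4_6: "x4 = 0 \<or> x6 = 0" using H[of "0" "0" "0" "1" "0" "(1)"] by fastforce
  have p5_6: "x5 = 0 \<or> x6 = 0" using H[of "0" "0" "0" "0" "1" "(1)"] by fastforce
  have c1: "x1 \<noteq> 0 \<longrightarrow> x1 = (x1 - x2 + x3 - x4 - x5 + x6)" using p1_2 p1_3 p1_4 p1_5 p1_6 by auto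
  have c2: "x2 \<noteq> 0 \<longrightarrow> x2 = - (x1 - x2 + x3 - x4 - x5 + x6)" using p1_2 p2_3 p2_4 p2_5 p2_6 by auto
  have c3: "x3 \<noteq> 0 \<longrightarrow> x3 = (x1 - x2 + x3 - x4 - x5 + x6)" using p1_3 p2_3 p3_4 p3_5 p3_6 by auto
  have c4: "x4 \<noteq> 0 \<longrightarrow> x4 = - (x1 - x2 + x3 - x4 - x5 + x6)" using p1_4 p2_4 p3_4 p4_5 p4_6 by auto
  have c5: "x5 \<noteq> 0 \<longrightarrow> x5 = - (x1 - x2 + x3 - x4 - x5 + x6)" using p1_5 p2_5 p3_5 p4_5 p5_6 by auto
  have c6: "x6 \<noteq> 0 \<longrightarrow> x6 = (x1 - x2 + x3 - x4 - x5 + x6)" using p1_6 p2_6 p3_6 p4_6 p5_6 by auto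
  show ?thesis using c1 c2 c3 c4 c5 c6 by blast
qed

lemma four_group:
  fixes x1 x2 x3 x4 :: real
  assumes H: "\<And>a1 a2 a3 a4. (x1 = 0 \<longrightarrow> a1 = 0) \<Longrightarrow> (x2 = 0 \<longrightarrow> a2 = 0) \<Longrightarrow> (x3 = 0 \<longrightarrow> a3 = 0) \<Longrightarrow> (x4 = 0 \<longrightarrow> a4 = 0) \<Longrightarrow> a1 - a2 - a3 + a4 = (0::real) \<Longrightarrow> a1 = 0 \<and> a2 = 0 \<and> a3 = 0 \<and> a4 = 0"
  shows "(x1 \<noteq> 0 \<longrightarrow> x1 = (x1 - x2 - x3 + x4)) \<and> (x2 \<noteq> 0 \<longrightarrow> x2 = - (x1 - x2 - x3 + x4)) \<and> (x3 \<noteq> 0 \<longrightarrow> x3 = - (x1 - x2 - x3 + x4)) \<and> (x4 \<noteq> 0 \<longrightarrow> x4 = (x1 - x2 - x3 + x4))"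
proof -
  have p1_2: "x1 = 0 \<or> x2 = 0" using H[of "1" "(1)" "0" "0"] by fastforce
  have p1_3: "x1 = 0 \<or> x3 = 0" using H[of "1" "0" "(1)" "0"] by fastforce
  have p1_4: "x1 = 0 \<or> x4 = 0" using H[of "1" "0" "0" "(-1)"] by fastforce
  have p2_3: "x2 = 0 \<or> x3 = 0" using H[of "0" "1" "(-1)" "0"] by fastforce
  have p2_4: "x2 = 0 \<or> x4 = 0" using H[of "0" "1" "0" "(1)"] by fastforce
  have p3_4: "x3 = 0 \<or> x4 = 0" using H[of "0" "0" "1" "(1)"] by fastforce
  have c1: "x1 \<noteq> 0 \<longrightarrow> x1 = (x1 - x2 - x3 + x4)" using p1_2 p1_3 p1_4 by auto
  have c2: "x2 \<noteq> 0 \<longrightarrow> x2 = - (x1 - x2 - x3 + x4)" using p1_2 p2_3 p2_4 by auto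
  have c3: "x3 \<noteq> 0 \<longrightarrow> x3 = - (x1 - x2 - x3 + x4)" using p1_3 p2_3 p3_4 by auto
  have c4: "x4 \<noteq> 0 \<longrightarrow> x4 = (x1 - x2 - x3 + x4)" using p1_4 p2_4 p3_4 by auto
  show ?thesis using c1 c2 c3 c4 by blast
qed

lemma val01:
  fixes x y :: real
  assumes "x \<ge> 0" "x \<noteq> 0 \<longrightarrow> x = y" "y \<in> {-1,0,1}"
  shows "x \<in> {0,1}"
  using assms by auto

theorem proposition1:
  fixes tail head :: "'n::finite \<Rightarrow> 'v::finite"
    and fv :: "'v \<Rightarrow> real" and u :: "real^'n"
    and l :: 'n and \<sigma> :: real and \<pi> :: "('n, 'v) mult"
  assumes "\<sigma> \<in> {1, -1}"
    and "\<pi> extreme_point_of (Cl tail head l \<sigma>)"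
    and "facet_defining (ineq_fun tail head fv u l \<sigma> \<pi>) (S1 tail head fv u)"
    and "nontrivial tail head fv u (ineq_fun tail head fv u l \<sigma> \<pi>)"
  shows "\<exists>c>0. comps01 (c *\<^sub>R \<pi>)"
proof -
  obtain bp bm g th et rh la mu where pi: "\<pi> = (bp, bm, g, th, et, rh, la, mu)"
    by (cases \<pi>) auto
  have ext: "(bp, bm, g, th, et, rh, la, mu) extreme_point_of Cl tail head l \<sigma>"
    using assms(2) pi by simp
  have inCl: "(bp, bm, g, th, et, rh, la, mu) \<in> Cl tail head l \<sigma>"
    using ext unfolding extreme_point_of_def by (elim conjE)
  note C = inCl[unfolded Cl_iff]
  note C1 = conjunct1[OF C] and C2 = conjunct1[OF conjunct2[OF C]]
    and C3 = conjunct1[OF conjunct2[OF conjunct2[OF C]]]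
    and C4 = conjunct1[OF conjunct2[OF conjunct2[OF conjunct2[OF C]]]]
    and C5 = conjunct2[OF conjunct2[OF conjunct2[OF conjunct2[OF C]]]]
  define P where "P v = Pagg g th v" for v
  define r where "r i = bp$i - bm$i + et$i - rh$i - la$i + mu$i" for i
  have eqn: "r i + P (tail i) - P (head i) = \<sigma> * Arow l i" for i
    using C5 unfolding r_def P_def by (simp add: algebra_simps)
  have KEY: "(dbp, dbm, dg, dth, dEt, drh, dla, dmu) = 0"
    if s1: "\<forall>k. bp$k = 0 \<longrightarrow> dbp$k = 0" and s2: "\<forall>k. bm$k = 0 \<longrightarrow> dbm$k = 0"
    and s3: "\<forall>k. g$k = 0 \<longrightarrow> dg$k = 0" and s4: "\<forall>k. th$k = 0 \<longrightarrow> dth$k = 0"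
    and s5: "\<forall>k. et$k = 0 \<longrightarrow> dEt$k = 0" and s6: "\<forall>k. rh$k = 0 \<longrightarrow> drh$k = 0"
    and s7: "\<forall>k. la$k = 0 \<longrightarrow> dla$k = 0" and s8: "\<forall>k. mu$k = 0 \<longrightarrow> dmu$k = 0"
    and hom: "\<forall>i. (dbp$i - dbm$i) + Pagg dg dth (tail i) - Pagg dg dth (head i) + dEt$i - drh$i - dla$i + dmu$i = 0"
    for dbp dbm dg dth dEt drh dla dmu
    using not_extreme[OF inCl s1 s2 s3 s4 s5 s6 s7 s8 hom] ext by blast
  have P00: "Pagg 0 0 v = 0" for v by (simp add: Pagg_def)

  have arcgrp: "a1 = 0 \<and> a2 = 0 \<and> a3 = 0 \<and> a4 = 0 \<and> a5 = 0 \<and> a6 = 0"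
    if "bp$i = 0 \<longrightarrow> a1 = 0" "bm$i = 0 \<longrightarrow> a2 = 0" "et$i = 0 \<longrightarrow> a3 = 0"
       "rh$i = 0 \<longrightarrow> a4 = 0" "la$i = 0 \<longrightarrow> a5 = 0" "mu$i = 0 \<longrightarrow> a6 = 0"
       "a1 - a2 + a3 - a4 - a5 + a6 = (0::real)" for i a1 a2 a3 a4 a5 a6
  proof -
    define E where "E a = (\<chi> k. if k = i then a else (0::real))" for a
    have Ei: "E a $ k = (if k = i then a else 0)" for a k unfolding E_def by simp
    have "(E a1, E a2, 0::real^('v \<times> bool), 0::real^('v \<times> bool), E a3, E a4, E a5, E a6) = 0"
      by (rule KEY) (use that in \<open>auto simp: Ei P00\<close>)
    then have "E a1 = 0 \<and> E a2 = 0 \<and> E a3 = 0 \<and> E a4 = 0 \<and> E a5 = 0 \<and> E a6 = 0"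
      by (simp add: zero_prod_def)
    moreover have "E a $ i = a" for a by (simp add: Ei)
    ultimately show ?thesis by (metis zero_index)
  qed
  have arc: "(bp$i \<noteq> 0 \<longrightarrow> bp$i = r i) \<and> (bm$i \<noteq> 0 \<longrightarrow> bm$i = - r i) \<and> (et$i \<noteq> 0 \<longrightarrow> et$i = r i)
      \<and> (rh$i \<noteq> 0 \<longrightarrow> rh$i = - r i) \<and> (la$i \<noteq> 0 \<longrightarrow> la$i = - r i) \<and> (mu$i \<noteq> 0 \<longrightarrow> mu$i = r i)" for i
    unfolding r_def by (rule six_group) (rule arcgrp; assumption)

  have nodegrp: "a1 = 0 \<and> a2 = 0 \<and> a3 = 0 \<and> a4 = 0"
    if "g$(v,True) = 0 \<longrightarrow> a1 = 0" "th$(v,True) = 0 \<longrightarrow> a2 = 0" "g$(v,False) = 0 \<longrightarrow> a3 = 0"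
       "th$(v,False) = 0 \<longrightarrow> a4 = 0" "a1 - a2 - a3 + a4 = (0::real)" for v a1 a2 a3 a4
  proof -
    define G where "G a b = (\<chi> t. if t = (v,True) then a else if t = (v,False) then b else (0::real))" for a b
    have Gi: "G a b $ t = (if t = (v,True) then a else if t = (v,False) then b else 0)" for a b t
      unfolding G_def by simp
    have PG: "Pagg (G a1 a3) (G a2 a4) w = 0" for w
      using that(5) by (simp add: Pagg_def Gi)
    have "(0::real^'n, 0::real^'n, G a1 a3, G a2 a4, 0::real^'n, 0::real^'n, 0::real^'n, 0::real^'n) = 0"
      by (rule KEY) (use that in \<open>auto simp: Gi PG\<close>)
    then have "G a1 a3 = 0 \<and> G a2 a4 = 0"
      by (simp add: zero_prod_def)
    moreover have "G a b $ (v,True) = a" "G a b $ (v,False) = b" for a b by (simp_all add: Gi)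
    ultimately show ?thesis by (metis zero_index)
  qed
  have node: "(g$(v,True) \<noteq> 0 \<longrightarrow> g$(v,True) = P v) \<and> (th$(v,True) \<noteq> 0 \<longrightarrow> th$(v,True) = - P v)
     \<and> (g$(v,False) \<noteq> 0 \<longrightarrow> g$(v,False) = - P v) \<and> (th$(v,False) \<noteq> 0 \<longrightarrow> th$(v,False) = P v)" for v
  proof -
    have e: "P v = g$(v,True) - th$(v,True) - g$(v,False) + th$(v,False)"
      by (simp add: P_def Pagg_def)
    show ?thesis unfolding e by (rule four_group) (rule nodegrp; assumption)
  qed

  have lev: "q v = (0::real)"
    if qs: "\<forall>v. P v = 0 \<longrightarrow> q v = 0" and qa: "\<forall>i. r i = 0 \<longrightarrow> q (tail i) = q (head i)" for q v
  proof -
    define \<alpha> where "\<alpha> w = q w / P w" for w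
    define \<beta> where "\<beta> i = - (q (tail i) - q (head i)) / r i" for i
    define sc where "sc x = (\<chi> k. \<beta> k * x $ k)" for x :: "real^'n"
    define sn where "sn x = (\<chi> t. \<alpha> (fst t) * x $ t)" for x :: "real^('v \<times> bool)"
    have sci: "sc x $ k = \<beta> k * x $ k" for x k unfolding sc_def by simp
    have sni: "sn x $ t = \<alpha> (fst t) * x $ t" for x t unfolding sn_def by simp
    have Pq: "Pagg (sn g) (sn th) w = q w" for w
    proof -
      have "Pagg (sn g) (sn th) w = \<alpha> w * P w" unfolding P_def Pagg_def by (simp add: sni algebra_simps)
      also have "\<dots> = q w" unfolding \<alpha>_def using qs by (cases "P w = 0") auto
      finally show ?thesis .
    qed
    have hom: "\<forall>i. (sc bp $ i - sc bm $ i) + Pagg (sn g) (sn th) (tail i) - Pagg (sn g) (sn th) (head i)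
       + sc et $ i - sc rh $ i - sc la $ i + sc mu $ i = 0"
    proof
      fix i
      have "(sc bp $ i - sc bm $ i) + sc et $ i - sc rh $ i - sc la $ i + sc mu $ i = \<beta> i * r i"
        unfolding r_def by (simp add: sci algebra_simps)
      also have "\<dots> = - (q (tail i) - q (head i))"
        unfolding \<beta>_def using qa by (cases "r i = 0") auto
      finally show "(sc bp $ i - sc bm $ i) + Pagg (sn g) (sn th) (tail i) - Pagg (sn g) (sn th) (head i)
       + sc et $ i - sc rh $ i - sc la $ i + sc mu $ i = 0" by (simp add: Pq)
    qed
    have "(sc bp, sc bm, sn g, sn th, sc et, sc rh, sc la, sc mu) = 0"
      by (rule KEY[OF _ _ _ _ _ _ _ _ hom]) (simp_all add: sci sni)
    then have "sn g = 0 \<and> sn th = 0" by (simp add: zero_prod_def)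
    then have "Pagg (sn g) (sn th) v = 0" by (simp add: P00)
    then show ?thesis by (simp add: Pq)
  qed
  have sig: "\<sigma> = 1 \<or> \<sigma> = -1" using assms(1) by auto
  have eq_nl: "r i = P (head i) - P (tail i)" if "i \<noteq> l" for i
    using eqn[of i] that by (simp add: Arow_def)
  have eq_l: "r l + P (tail l) - P (head l) = \<sigma>" using eqn[of l] by (simp add: Arow_def)
  have PR: "(\<forall>v. P v \<in> {-1,0,1}) \<and> (\<forall>i. r i \<in> {-1,0,1})"
  proof (cases "r l = 0")
    case False
    have P0: "P v = 0" for v
    proof (rule lev[of P])
      show "\<forall>v. P v = 0 \<longrightarrow> P v = 0" by simp
      show "\<forall>i. r i = 0 \<longrightarrow> P (tail i) = P (head i)"
      proof (intro allI impI)
        fix i assume "r i = 0"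
        then have "i \<noteq> l" using False by auto
        then show "P (tail i) = P (head i)" using eq_nl[of i] \<open>r i = 0\<close> by simp
      qed
    qed
    have "r i \<in> {-1,0,1}" for i
    proof (cases "i = l")
      case True then show ?thesis using eq_l P0 sig by auto
    next
      case False then show ?thesis using eq_nl[OF False] P0 by simp
    qed
    then show ?thesis using P0 by simp
  next
    case True
    define a where "a = P (tail l)"
    define b where "b = P (head l)"
    have ab: "a - b = \<sigma>" using eq_l True unfolding a_def b_def by simp
    have vals: "P v = a \<or> P v = b \<or> P v = 0" for v
    proof -
      define q where "q w = (if P w \<noteq> a \<and> P w \<noteq> b then P w else 0)" for w
      have "q v = 0"
      proof (rule lev[of q])
        show "\<forall>v. P v = 0 \<longrightarrow> q v = 0" unfolding q_def by simp
        show "\<forall>i. r i = 0 \<longrightarrow> q (tail i) = q (head i)"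
        proof (intro allI impI)
          fix i assume ri: "r i = 0"
          show "q (tail i) = q (head i)"
          proof (cases "i = l")
            case True then show ?thesis unfolding q_def a_def b_def by simp
          next
            case False then show ?thesis using eq_nl[OF False] ri unfolding q_def by simp
          qed
        qed
      qed
      then show ?thesis unfolding q_def by (auto split: if_splits)
    qed
    have zero: "a = 0 \<or> b = 0"
    proof (rule ccontr)
      assume nz: "\<not> (a = 0 \<or> b = 0)"
      define q where "q w = (if (P w = a \<or> P w = b) \<and> P w \<noteq> 0 then 1 else (0::real))" for w
      have "q (tail l) = 0"
      proof (rule lev[of q])
        show "\<forall>v. P v = 0 \<longrightarrow> q v = 0" unfolding q_def by simp
        show "\<forall>i. r i = 0 \<longrightarrow> q (tail i) = q (head i)"
        proof (intro allI impI)
          fix i assume ri: "r i = 0"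
          show "q (tail i) = q (head i)"
          proof (cases "i = l")
            case True then show ?thesis using nz unfolding q_def a_def b_def by simp
          next
            case False then show ?thesis using eq_nl[OF False] ri unfolding q_def by simp
          qed
        qed
      qed
      moreover have "q (tail l) = 1" using nz unfolding q_def a_def by simp
      ultimately show False by simp
    qed
    define c where "c = a + b"
    have c1: "c = 1 \<or> c = -1" using zero ab sig unfolding c_def by auto
    have Pc: "P v = 0 \<or> P v = c" for v using vals[of v] zero unfolding c_def by auto
    have "r i \<in> {-1,0,1}" for i
    proof (cases "i = l")
      case True then show ?thesis using \<open>r l = 0\<close> by simp
    next
      case False then show ?thesis using eq_nl[OF False] Pc[of "head i"] Pc[of "tail i"] c1 by auto
    qed
    moreover have "P v \<in> {-1,0,1}" for v using Pc[of v] c1 by auto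
    ultimately show ?thesis by simp
  qed
  have "comps01 \<pi>"
  proof -
    have A: "bp$k \<in> {0,1} \<and> bm$k \<in> {0,1} \<and> et$k \<in> {0,1} \<and> rh$k \<in> {0,1} \<and> la$k \<in> {0,1} \<and> mu$k \<in> {0,1}" for k
    proof -
      have r1: "r k \<in> {-1,0,1}" "- r k \<in> {-1,0,1}" using PR by auto
      note ak = arc[of k]
      have nn: "bp$k \<ge> 0" "bm$k \<ge> 0" "et$k \<ge> 0" "rh$k \<ge> 0" "la$k \<ge> 0" "mu$k \<ge> 0"
        using C3 by simp_all
      have "bp$k \<in> {0,1}" using val01[OF nn(1) _ r1(1)] ak by simp
      moreover have "bm$k \<in> {0,1}" using val01[OF nn(2) _ r1(2)] ak by simp
      moreover have "et$k \<in> {0,1}" using val01[OF nn(3) _ r1(1)] ak by simp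
      moreover have "rh$k \<in> {0,1}" using val01[OF nn(4) _ r1(2)] ak by simp
      moreover have "la$k \<in> {0,1}" using val01[OF nn(5) _ r1(2)] ak by simp
      moreover have "mu$k \<in> {0,1}" using val01[OF nn(6) _ r1(1)] ak by simp
      ultimately show ?thesis by blast
    qed
    have B: "g$t \<in> {0,1} \<and> th$t \<in> {0,1}" for t
    proof -
      obtain v b where t: "t = (v, b)" by fastforce
      have p1: "P v \<in> {-1,0,1}" "- P v \<in> {-1,0,1}" using PR by auto
      note nv = node[of v]
      have nn: "g$(v,True) \<ge> 0" "th$(v,True) \<ge> 0" "g$(v,False) \<ge> 0" "th$(v,False) \<ge> 0"
        using C4 by simp_all
      have "g$(v,True) \<in> {0,1}" using val01[OF nn(1) _ p1(1)] nv by simp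
      moreover have "th$(v,True) \<in> {0,1}" using val01[OF nn(2) _ p1(2)] nv by simp
      moreover have "g$(v,False) \<in> {0,1}" using val01[OF nn(3) _ p1(2)] nv by simp
      moreover have "th$(v,False) \<in> {0,1}" using val01[OF nn(4) _ p1(1)] nv by simp
      ultimately show ?thesis unfolding t by (cases b) simp_all
    qed
    show ?thesis unfolding pi comps01_def using A B by simp
  qed
  then show ?thesis by (intro exI[of _ 1]) simp
qed

end
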